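(* Let $\mathcal H$ be a set, $\mathcal Z$ a space with an unknown distribution $\mathcal D_Z$, and $b_0<b_1<\cdots<b_K$ real numbers with $K\ge1$. Let $f:\mathcal H\times\mathcal Z\to\{b_0,\dots,b_K\}$, and for $j\in\{1,\dots,K\}$ let $\alpha_j=b_j-b_{j-1}$, $f_j(h,z)=\mathbf 1[f(h,z)\ge b_j]$, $F(h)=\mathbb{E}_{Z\sim\mathcal D_Z}[f(h,Z)]$. Let $S=\{Z_1,\dots,Z_n\}$ be an i.i.d. sample from $\mathcal D_Z$ and $\hat F_j(h,S)=\frac1n\sum_{i=1}^nf_j(h,Z_i)$. Then for any probability distribution $\pi$ on $\mathcal H$ that is independent of $S$ and any $\delta\in(0,1)$, \[ \mathbb{P}\left[\exists\rho\in\mathcal P:\ \mathbb{E}_{h\sim\rho}[F(h)]\ge b_0+\sum_{j=1}^K\alpha_j\,\mathrm{kl}^{-1,+}\left(\mathbb{E}_{h\sim\rho}[\hat F_j(h,S)],\frac{\mathrm{KL}(\rho\|\pi)+\ln\frac{2K\sqrt n}{\delta}}{n}\right)\right]\le\delta, \] where $\mathcal P$ is the set of all probability distributions on $\mathcal H$, including those that depend on $S$.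
   Context: $\mathrm{KL}(\rho\|\pi)$ is the Kullback–Leibler divergence. For $p,q\in[0,1]$, $\mathrm{kl}(p\|q)=p\ln\frac pq+(1-p)\ln\frac{1-p}{1-q}$ and $\mathrm{kl}^{-1,+}(\hat p,\varepsilon)=\max\{p\in[0,1]:\mathrm{kl}(\hat p\|p)\le\varepsilon\}$. *)

theory Defs
  imports "HOL-Probability.Probability"
begin

definition kl_bin :: "real \<Rightarrow> real \<Rightarrow> ereal" where
  "kl_bin p q =
     (if p = 0 then 0 else if q = 0 then \<infinity> else ereal (p * ln (p / q))) +
     (if p = 1 then 0 else if q = 1 then \<infinity> else ereal ((1 - p) * ln ((1 - p) / (1 - q))))"

definition kl_inv_plus :: "real \<Rightarrow> ereal \<Rightarrow> real" where
  "kl_inv_plus phat eps = Sup {p \<in> {0..1}. kl_bin phat p \<le> eps}"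

definition KL_div :: "'a measure \<Rightarrow> 'a measure \<Rightarrow> ereal" where
  "KL_div \<rho> \<pi> =
     (if absolutely_continuous \<pi> \<rho> \<and> integrable \<rho> (\<lambda>x. ln (enn2real (RN_deriv \<pi> \<rho> x)))
      then ereal (\<integral>x. ln (enn2real (RN_deriv \<pi> \<rho> x)) \<partial>\<rho>)
      else \<infinity>)"

definition prob_dists :: "'a measure \<Rightarrow> 'a measure set" where
  "prob_dists MH = {\<rho>. prob_space \<rho> \<and> sets \<rho> = sets MH}"

end

theory Submission
  imports Defs "HOL-Probability.Probability"
begin


lemma ln_ratio_lower:
  fixes x :: real assumes "0 \<le> x" "x < 1"
  shows "2 * x \<le> ln (1 + x) - ln (1 - x)"
proof -
  let ?u = "\<lambda>t::real. ln (1 + t) - ln (1 - t) - 2 * t"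
  have "?u 0 \<le> ?u x"
  proof (rule DERIV_nonneg_imp_nondecreasing[OF assms(1)])
    fix t assume t: "0 \<le> t" "t \<le> x"
    hence t1: "t < 1" using assms by simp
    have "t * t < 1 * 1" by (rule mult_strict_mono) (use t t1 in auto)
    hence p: "0 < 1 - t * t" by simp
    have "DERIV ?u t :> 2 * t^2 / (1 - t*t)"
      using t t1 p by (auto intro!: derivative_eq_intros simp: field_simps power2_eq_square)
    moreover have "2 * t^2 / (1 - t*t) \<ge> 0" using p by simp
    ultimately show "\<exists>y. DERIV ?u t :> y \<and> y \<ge> 0" by blast
  qed
  thus ?thesis by simp
qed

lemma ln_ratio_upper:
  fixes x :: real assumes "0 \<le> x" "x < 1"
  shows "ln (1 + x) - ln (1 - x) \<le> 2 * x + (2/3) * x^3 / (1 - x^2)"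
proof -
  let ?v = "\<lambda>t::real. 2 * t + (2/3) * t^3 / (1 - t^2) - (ln (1 + t) - ln (1 - t))"
  have "?v 0 \<le> ?v x"
  proof (rule DERIV_nonneg_imp_nondecreasing[OF assms(1)])
    fix t assume t: "0 \<le> t" "t \<le> x"
    hence t1: "t < 1" using assms by simp
    have "t * t < 1 * 1" by (rule mult_strict_mono) (use t t1 in auto)
    hence p: "0 < 1 - t * t" by simp
    have "DERIV ?v t :> (4/3) * t^4 / (1 - t*t)^2"
      using t t1 p apply (auto intro!: derivative_eq_intros simp: power2_eq_square)
      apply (simp add: divide_simps)
      apply (simp add: algebra_simps power2_eq_square power4_eq_xxxx eval_nat_numeral)
      done
    moreover have "(4/3) * t^4 / (1 - t*t)^2 \<ge> 0" using p by simp
    ultimately show "\<exists>y. DERIV ?v t :> y \<and> y \<ge> 0" by blast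
  qed
  thus ?thesis by simp
qed



definition la :: "nat \<Rightarrow> real" where
  "la m = ln (fact m) + real m - (real m + 1/2) * ln (real m)"

lemma ln_succ_diff:
  assumes "m \<ge> 1"
  shows "ln (real m + 1) - ln (real m) = ln (1 + 1/(2*real m+1)) - ln (1 - 1/(2*real m+1))"
proof -
  have "1 + 1/(2*real m+1) = (2*(real m + 1))/(2*real m+1)" by (simp add: field_simps)
  moreover have "1 - 1/(2*real m+1) = (2*real m)/(2*real m+1)" by (simp add: field_simps)
  ultimately have "ln (1 + 1/(2*real m+1)) - ln (1 - 1/(2*real m+1))
      = ln (2*(real m + 1)) - ln (2 * real m)"
    using assms by (simp add: ln_div)
  also have "\<dots> = ln (real m + 1) - ln (real m)"
  proof -
    have "ln (2*(real m+1)) = ln 2 + ln (real m + 1)" using ln_mult[of 2 "real m + 1"] by simp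
    moreover have "ln (2*real m) = ln 2 + ln (real m)" using ln_mult[of 2 "real m"] assms by simp
    ultimately show ?thesis by linarith
  qed
  finally show ?thesis by simp
qed

lemma la_Suc:
  assumes "m \<ge> 1"
  shows "la (Suc m) = la m + 1 - (real m + 1/2) * (ln (real m + 1) - ln (real m))"
proof -
  have "ln (fact (Suc m) :: real) = ln (real m + 1) + ln (fact m)"
    by (simp add: ln_mult add.commute)
  thus ?thesis unfolding la_def by (simp add: algebra_simps)
qed

lemma la_dec: assumes "m \<ge> 1" shows "la (Suc m) \<le> la m"
proof -
  let ?x = "1/(2*real m+1)"
  have x: "0 \<le> ?x" "?x < 1" using assms by auto
  have "1 \<le> (real m + 1/2) * (2 * ?x)" using assms by (simp add: field_simps)
  also have "\<dots> \<le> (real m + 1/2) * (ln (1 + ?x) - ln (1 - ?x))"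
    by (rule mult_left_mono[OF ln_ratio_lower[OF x]]) simp
  finally show ?thesis using la_Suc[OF assms] ln_succ_diff[OF assms] by simp
qed

lemma la_inc: assumes "m \<ge> 1" shows "la m - 1/(12*real m) \<le> la (Suc m) - 1/(12*(real m + 1))"
proof -
  let ?x = "1/(2*real m+1)"
  have x: "0 \<le> ?x" "?x < 1" using assms by auto
  have "(real m + 1/2) * (ln (1 + ?x) - ln (1 - ?x)) \<le> (real m + 1/2) * (2 * ?x + (2/3) * ?x^3 / (1 - ?x^2))"
    by (rule mult_left_mono[OF ln_ratio_upper[OF x]]) simp
  also have "\<dots> = 1 + 1/(12*real m) - 1/(12*(real m + 1))"
  proof -
    define x where "x = ?x"
    have x0: "0 < x" "x < 1" using assms by (auto simp: x_def)
    have xm: "real m = (1 - x) / (2 * x)" using x0 by (simp add: x_def field_simps)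
    have sq: "1 - x^2 = (1 - x) * (1 + x)" by (simp add: algebra_simps power2_eq_square)
    have "(real m + 1/2) * (2 * x + (2/3) * x^3 / (1 - x^2)) = 1 + 1/(12*real m) - 1/(12*(real m + 1))"
    proof -
      have ne: "1 - x \<noteq> 0" "1 + x \<noteq> 0" "x \<noteq> 0" using x0 by auto
      have "(real m + 1/2) * (2 * x + (2/3) * x^3 / ((1 - x) * (1 + x)))
         = (1/(2*x)) * (2 * x + (2/3) * x^3 / ((1 - x) * (1 + x)))" unfolding xm using ne by (simp add: field_simps)
      also have "\<dots> = 1 + (1/3) * x^2 / ((1 - x) * (1 + x))" using ne by (simp add: field_simps power2_eq_square power3_eq_cube)
      also have "\<dots> = 1 + 1/(12*real m) - 1/(12*(real m + 1))"
      proof -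
        have m0: "real m > 0" using assms by simp
        have e1: "1/(12*real m) - 1/(12*(real m + 1)) = 1/(12*(real m*(real m+1)))"
          using m0 by (simp add: field_simps)
        have e2: "real m * (real m + 1) = (1-x)*(1+x)/(4*x^2)" unfolding xm using ne
          by (simp add: field_simps power2_eq_square)
        have e3': "1/(12*(d/(4*x^2))) = (1/3) * x^2 / d" if "d \<noteq> 0" for d
          using ne that by (simp add: field_simps power2_eq_square)
        have e3: "1/(12*((1-x)*(1+x)/(4*x^2))) = (1/3) * x^2 / ((1 - x) * (1 + x))"
          by (rule e3') (use ne in simp)
        show ?thesis using e1 e2 e3 by simp
      qed
      finally show ?thesis unfolding sq .
    qed
    thus ?thesis by (simp add: x_def)
  qed
  finally show ?thesis using la_Suc[OF assms] ln_succ_diff[OF assms] by simp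
qed

lemma la_1: "la 1 = 1" by (simp add: la_def)
lemma la_1': "la (Suc 0) = 1" by (simp add: la_def)

lemma la_upper: assumes "m \<ge> 1" shows "la m \<le> 1"
  using assms
proof (induction m rule: dec_induct)
  case base thus ?case by (simp add: la_1 la_1')
next
  case (step j) thus ?case using la_dec[of j] by simp
qed

lemma la_lower: assumes "m \<ge> 1" shows "11/12 \<le> la m"
proof -
  have "la 1 - 1/12 \<le> la m - 1/(12*real m)"
    using assms
  proof (induction m rule: dec_induct)
    case base thus ?case by simp
  next
    case (step j) thus ?case using la_inc[of j] by (simp add: add.commute)
  qed
  moreover have "1/(12*real m) \<ge> 0" by simp
  ultimately show ?thesis using la_1 by linarith
qed

lemma la_mono: assumes "1 \<le> i" "i \<le> j" shows "la j \<le> la i"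
  using assms(2)
proof (induction j rule: dec_induct)
  case base thus ?case by simp
next
  case (step j) thus ?case using la_dec[of j] assms(1) by simp
qed

lemma ln_fact_la: assumes "m \<ge> 1"
  shows "ln (fact m) = la m - real m + (real m + 1/2) * ln (real m)"
  by (simp add: la_def)

lemma term_bound0:
  assumes k: "1 \<le> k" "1 \<le> r"
  shows "real ((k+r) choose k) * (real k / real (k+r))^k * (real r / real (k+r))^r
         \<le> exp (-11/12) * sqrt (real (k+r)) / sqrt (real k * real r)"
proof -
  define n where "n = k + r"
  have n: "n \<ge> 1" "real n > 0" "n - k = r" using k by (auto simp: n_def)
  have pos: "real (n choose k) * (real k / real n)^k * (real r / real n)^r > 0"
    using k n by (simp add: zero_less_binomial)
  have "ln (real (n choose k) * (real k / real n)^k * (real r / real n)^r)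
        = ln (fact n) - ln (fact k) - ln (fact r) + real k * (ln k - ln n) + real r * (ln r - ln n)"
    using k n
    by (simp add: binomial_fact ln_mult ln_div ln_realpow zero_less_binomial)
  also have "\<dots> = la n - la k - la r + (1/2) * (ln n - ln k - ln r)"
    using k n by (simp add: ln_fact_la algebra_simps n_def)
  also have "\<dots> \<le> -11/12 + (1/2) * (ln n - ln k - ln r)"
    using la_mono[of r n] la_lower[of k] n k by (simp add: n_def)
  also have "\<dots> = ln (exp (-11/12) * sqrt (real n) / sqrt (real k * real r))"
    using k n by (simp add: ln_mult ln_div ln_sqrt) (simp add: field_simps)
  finally show ?thesis
    using pos k n unfolding n_def[symmetric] by (subst (asm) ln_le_cancel_iff) auto
qed

lemma term_bound:
  assumes k: "1 \<le> k" "k < n"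
  shows "real (n choose k) * (real k / real n)^k * (1 - real k / real n)^(n-k)
         \<le> exp (-11/12) * sqrt (real n) / sqrt (real k * real (n - k))"
proof -
  define r where "r = n - k"
  have r: "n = k + r" "r \<ge> 1" using k by (auto simp: r_def)
  have "1 - real k / real n = real r / real n" using r k by (simp add: field_simps)
  thus ?thesis using term_bound0[OF k(1) r(2)] r by simp
qed



lemma G_deriv:
  fixes x N :: real assumes "0 < x" "x < N"
  shows "((\<lambda>x. arcsin (2*x/N - 1)) has_real_derivative 1 / sqrt (x*(N-x))) (at x)"
proof -
  have N: "N > 0" using assms by simp
  have y: "-1 < 2*x/N - 1" "2*x/N - 1 < 1" using assms N by (auto simp: field_simps)
  have d1: "((\<lambda>x. 2*x/N - 1) has_real_derivative 2/N) (at x)"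
    using N by (auto intro!: derivative_eq_intros)
  have d2: "DERIV arcsin (2*x/N - 1) :> inverse (sqrt (1 - (2*x/N - 1)\<^sup>2))"
    by (rule DERIV_arcsin[OF y])
  have "((\<lambda>x. arcsin (2*x/N - 1)) has_real_derivative inverse (sqrt (1 - (2*x/N - 1)\<^sup>2)) * (2/N)) (at x)"
    using DERIV_chain2[OF d2 d1] by simp
  moreover have "inverse (sqrt (1 - (2*x/N - 1)\<^sup>2)) * (2/N) = 1 / sqrt (x*(N-x))"
  proof -
    have "1 - (2*x/N - 1)\<^sup>2 = (2 / N)^2 * (x*(N-x))"
      using N by (simp add: field_simps power2_eq_square)
    hence "sqrt (1 - (2*x/N - 1)\<^sup>2) = (2/N) * sqrt (x*(N-x))"
      using N by (simp add: real_sqrt_mult)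
    thus ?thesis using N assms by (simp add: field_simps)
  qed
  ultimately show ?thesis by simp
qed

lemma inv_sqrt_convex:
  fixes a b u :: real assumes "0 < a" "0 < b" "a + b \<le> 2*u"
  shows "2 / sqrt u \<le> 1 / sqrt a + 1 / sqrt b"
proof -
  have u: "u > 0" using assms by simp
  let ?p = "1 / sqrt a" and ?q = "1 / sqrt b"
  have pq: "?p > 0" "?q > 0" using assms by auto
  have "sqrt (a*b) \<le> (a + b)/2" using arith_geo_mean_sqrt[of a b] assms by simp
  also have "\<dots> \<le> u" using assms by simp
  finally have ab: "sqrt (a*b) \<le> u" .
  have "(2 / sqrt u)^2 = 4 / u" using u by (simp add: power_divide)
  also have "\<dots> \<le> 4 / sqrt (a*b)"
    using ab assms by (intro divide_left_mono) (auto intro!: mult_pos_pos)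
  also have "4 / sqrt (a*b) = 4 * ?p * ?q" using assms by (simp add: real_sqrt_mult)
  also have "\<dots> \<le> (?p + ?q)^2"
    using sum_squares_ge_zero[of "?p - ?q" 0] by (simp add: power2_eq_square algebra_simps)
  finally have "(2 / sqrt u)^2 \<le> (?p + ?q)^2" .
  thus ?thesis using pq u by (simp add: power2_le_iff_abs_le abs_le_square_iff)
qed

lemma step_bound:
  fixes k N :: real assumes k: "1 \<le> k" "k \<le> N - 1"
  shows "1 / sqrt (k*(N-k)) \<le> arcsin (2*(k+1/2)/N - 1) - arcsin (2*(k-1/2)/N - 1)"
proof -
  let ?G = "\<lambda>x. arcsin (2*x/N - 1)"
  define c where "c = 1 / sqrt (k*(N-k))"
  let ?psi = "\<lambda>t. ?G (k+t) - ?G (k-t) - 2*t*c"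
  have "?psi 0 \<le> ?psi (1/2)"
  proof (rule DERIV_nonneg_imp_nondecreasing[of 0 "1/2" ?psi])
    fix t :: real assume t: "0 \<le> t" "t \<le> 1/2"
    have p1: "0 < k + t" "k + t < N" "0 < k - t" "k - t < N" using k t by auto
    have da: "((\<lambda>t. ?G (k+t)) has_real_derivative 1 / sqrt ((k+t)*(N-(k+t))) * 1) (at t)"
      by (rule DERIV_chain2[of "\<lambda>x. arcsin (2*x/N - 1)" _ "\<lambda>t. k+t", OF G_deriv[OF p1(1,2)]])
         (auto intro!: derivative_eq_intros)
    have db: "((\<lambda>t. ?G (k-t)) has_real_derivative 1 / sqrt ((k-t)*(N-(k-t))) * (-1)) (at t)"
      by (rule DERIV_chain2[of "\<lambda>x. arcsin (2*x/N - 1)" _ "\<lambda>t. k-t", OF G_deriv[OF p1(3,4)]])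
         (auto intro!: derivative_eq_intros)
    have d: "(?psi has_real_derivative
        (1 / sqrt ((k+t)*(N-(k+t))) * 1 - 1 / sqrt ((k-t)*(N-(k-t))) * (-1) - 2 * c)) (at t)"
    proof -
      have dc: "((\<lambda>t. 2*t*c) has_real_derivative 2*c) (at t)" by (auto intro!: derivative_eq_intros)
      show ?thesis by (rule DERIV_diff[OF DERIV_diff[OF da db] dc])
    qed
    have "2 / sqrt (k*(N-k)) \<le> 1 / sqrt ((k+t)*(N-(k+t))) + 1 / sqrt ((k-t)*(N-(k-t)))"
    proof (rule inv_sqrt_convex)
      show "0 < (k+t)*(N-(k+t))" "0 < (k-t)*(N-(k-t))" using p1 by simp_all
      have "0 \<le> t*t" by simp
      thus "(k+t)*(N-(k+t)) + (k-t)*(N-(k-t)) \<le> 2*(k*(N-k))" by (simp add: algebra_simps)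
    qed
    hence "0 \<le> 1 / sqrt ((k+t)*(N-(k+t))) * 1 - 1 / sqrt ((k-t)*(N-(k-t))) * (-1) - 2 * c" by (simp add: c_def)
    thus "\<exists>y. (?psi has_real_derivative y) (at t) \<and> 0 \<le> y" using d by blast
  qed simp
  thus ?thesis by (simp add: c_def)
qed

lemma S_bound:
  assumes "n \<ge> 2"
  shows "(\<Sum>k=1..n-1. 1 / sqrt (real k * real (n - k))) \<le> pi"
proof -
  let ?H = "\<lambda>k::nat. arcsin (2*(real k - 1/2)/real n - 1)"
  have "(\<Sum>k=1..n-1. 1 / sqrt (real k * real (n - k))) \<le> (\<Sum>k=1..n-1. ?H (Suc k) - ?H k)"
  proof (rule sum_mono)
    fix k assume "k \<in> {1..n-1}"
    hence k: "1 \<le> real k" "real k \<le> real n - 1" "real (n-k) = real n - real k" by auto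
    show "1 / sqrt (real k * real (n - k)) \<le> ?H (Suc k) - ?H k"
      using step_bound[OF k(1,2)] k(3) by (simp add: algebra_simps)
  qed
  also have "\<dots> = ?H (Suc (n-1)) - ?H 1" by (rule sum_Suc_diff) (use assms in auto)
  also have "\<dots> \<le> pi/2 - (-(pi/2))"
  proof -
    have n: "real n \<ge> 2" using assms by simp
    have "?H (Suc (n-1)) \<le> pi/2" using n by (intro arcsin_ubound) (auto simp: field_simps)
    moreover have "-(pi/2) \<le> ?H 1" using n by (intro arcsin_lbound) (auto simp: field_simps)
    ultimately show ?thesis by linarith
  qed
  finally show ?thesis by simp
qed



lemma maurer_small:
  assumes "n \<in> {1..8}"
  shows "(\<Sum>k=0..n. real (n choose k) * (real k / real n)^k * (1 - real k / real n)^(n-k))^2 \<le> 4 * real n"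
proof -
  have "n = 1 \<or> n = 2 \<or> n = 3 \<or> n = 4 \<or> n = 5 \<or> n = 6 \<or> n = 7 \<or> n = 8" using assms by auto
  thus ?thesis by (elim disjE) (simp_all add: eval_nat_numeral binomial_Suc_Suc)
qed

lemma exp_11_12: "3 * pi \<le> 4 * exp (11/12 :: real)"
proof -
  have "exp (11/12 :: real) = exp (11/144) ^ 12"
    using exp_of_nat_mult[of 12 "11/144 :: real"] by simp
  also have "\<dots> \<ge> (1 + 11/144) ^ 12"
    by (intro power_mono) (use exp_ge_add_one_self[of "11/144::real"] in auto)
  finally have "exp (11/12 :: real) \<ge> (1 + 11/144) ^ 12" .
  moreover have "(1 + 11/144 :: real) ^ 12 \<ge> 12/5" by (simp add: power_divide)
  moreover have "pi \<le> 63/20" using pi_approx(2) by simp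
  ultimately show ?thesis by linarith
qed

lemma maurer_large:
  assumes n: "n \<ge> 9"
  shows "(\<Sum>k=0..n. real (n choose k) * (real k / real n)^k * (1 - real k / real n)^(n-k)) \<le> 2 * sqrt (real n)"
proof -
  let ?f = "\<lambda>k. real (n choose k) * (real k / real n)^k * (1 - real k / real n)^(n-k)"
  have n0: "real n > 0" using n by simp
  have "(\<Sum>k=0..n. ?f k) = ?f 0 + (\<Sum>k=1..n. ?f k)"
    by (simp add: sum.atLeast_Suc_atMost)
  also have "(\<Sum>k=1..n. ?f k) = (\<Sum>k=1..n-1. ?f k) + ?f n"
  proof -
    obtain m where m: "n = Suc m" using n by (cases n) auto
    show ?thesis unfolding m using n m by (simp add: sum.cl_ivl_Suc)
  qed
  also have "?f 0 = 1" by simp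
  also have "?f n = 1" using n0 by simp
  also have "(\<Sum>k=1..n-1. ?f k) \<le> (\<Sum>k=1..n-1. exp (-11/12) * sqrt (real n) * (1 / sqrt (real k * real (n - k))))"
  proof (rule sum_mono)
    fix k assume "k \<in> {1..n-1}"
    hence k: "1 \<le> k" "k < n" using n by auto
    show "?f k \<le> exp (-11/12) * sqrt (real n) * (1 / sqrt (real k * real (n - k)))"
      using term_bound[OF k] by simp
  qed
  also have "\<dots> = exp (-11/12) * sqrt (real n) * (\<Sum>k=1..n-1. 1 / sqrt (real k * real (n - k)))"
    by (simp add: sum_distrib_left)
  also have "\<dots> \<le> exp (-11/12) * sqrt (real n) * pi"
    by (intro mult_left_mono S_bound) (use n in auto)
  finally have 1: "(\<Sum>k=0..n. ?f k) \<le> 1 + exp (-11/12) * sqrt (real n) * pi + 1" by simp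
  have "exp (-11/12) * pi \<le> 4/3"
    using exp_11_12 by (simp add: exp_minus field_simps)
  hence "exp (-11/12) * sqrt (real n) * pi \<le> 4/3 * sqrt (real n)"
    by (metis mult.commute mult.left_commute mult_right_mono real_sqrt_ge_zero of_nat_0_le_iff)
  moreover have "sqrt (real n) \<ge> 3"
    using n real_sqrt_le_mono[of 9 "real n"] by simp
  ultimately show ?thesis using 1 by linarith
qed

lemma maurer:
  assumes n: "n \<ge> 1"
  shows "(\<Sum>k=0..n. real (n choose k) * (real k / real n)^k * (1 - real k / real n)^(n-k)) \<le> 2 * sqrt (real n)"
proof (cases "n \<ge> 9")
  case True thus ?thesis by (rule maurer_large)
next
  case False
  hence "n \<in> {1..8}" using n by auto
  from maurer_small[OF this] have "(\<Sum>k=0..n. real (n choose k) * (real k / real n)^k * (1 - real k / real n)^(n-k)) \<le> sqrt (4 * real n)"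
    by (rule real_le_rsqrt)
  also have "sqrt (4 * real n) = 2 * sqrt (real n)" by (simp add: real_sqrt_mult)
  finally show ?thesis .
qed



definition kinf :: "real \<Rightarrow> real \<Rightarrow> bool" where
  "kinf q p \<longleftrightarrow> (q \<noteq> 0 \<and> p = 0) \<or> (q \<noteq> 1 \<and> p = 1)"

definition klr :: "real \<Rightarrow> real \<Rightarrow> real" where
  "klr q p = (if q = 0 then 0 else q * ln (q / p)) + (if q = 1 then 0 else (1 - q) * ln ((1 - q) / (1 - p)))"

lemma kl_bin_alt: "kl_bin q p = (if kinf q p then \<infinity> else ereal (klr q p))"
  unfolding kl_bin_def kinf_def klr_def by auto

definition KLE :: "nat \<Rightarrow> real \<Rightarrow> real \<Rightarrow> ennreal" where
  "KLE n q p = (if kinf q p then \<infinity> else ennreal (exp (real n * klr q p)))"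

lemma exp_part:
  fixes u v :: real and m :: nat
  assumes "m \<noteq> 0 \<Longrightarrow> u > 0 \<and> v > 0"
  shows "exp (if m = 0 then 0 else real m * ln (u / v)) * v ^ m = u ^ m"
proof (cases "m = 0")
  case False
  with assms have uv: "u > 0" "v > 0" by auto
  have "exp (real m * ln (u / v)) = (u / v) ^ m"
    using uv by (simp add: exp_of_nat_mult)
  thus ?thesis using False uv by (simp add: power_divide)
qed simp

lemma mult4_helper: "(X::real) * a = c \<Longrightarrow> Y * b = d \<Longrightarrow> X * Y * (a * b) = c * d"
  by (metis mult.assoc mult.left_commute)

lemma KLE_binom:
  assumes n: "n \<ge> 1" and k: "k \<le> n" and p: "0 \<le> p" "p \<le> 1"
  shows "KLE n (real k / real n) p * ennreal (p ^ k * (1 - p) ^ (n - k))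
         \<le> ennreal ((real k / real n) ^ k * (1 - real k / real n) ^ (n - k))"
proof (cases "kinf (real k / real n) p")
  case True
  have "p ^ k * (1 - p) ^ (n - k) = 0"
  proof -
    from True n k consider "k \<noteq> 0" "p = 0" | "k \<noteq> n" "p = 1"
      unfolding kinf_def by (auto simp: field_simps)
    thus ?thesis using k by cases auto
  qed
  hence "KLE n (real k / real n) p * ennreal (p ^ k * (1 - p) ^ (n - k)) = 0"
    by (simp only: ennreal_0 mult_zero_right)
  thus ?thesis by (metis zero_le)
next
  case False
  let ?q = "real k / real n"
  have n0: "real n > 0" using n by simp
  have nq: "real n * ?q = real k" using n0 by simp
  have nq1: "real n * (1 - ?q) = real (n - k)" using n0 k by (simp add: field_simps of_nat_diff)
  have q0: "?q = 0 \<longleftrightarrow> k = 0" using n0 by simp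
  have q1: "?q = 1 \<longleftrightarrow> k = n" using n0 by (auto simp: field_simps)
  have e: "real n * klr ?q p = (if k = 0 then 0 else real k * ln (?q / p))
                + (if n - k = 0 then 0 else real (n - k) * ln ((1 - ?q) / (1 - p)))"
    unfolding klr_def distrib_left using q0 q1 k nq nq1
    by (simp add: mult.assoc[symmetric])
  have A: "exp (if k = 0 then 0 else real k * ln (?q / p)) * p ^ k = ?q ^ k"
    by (rule exp_part) (use False n0 p in \<open>auto simp: kinf_def\<close>)
  have B: "exp (if n - k = 0 then 0 else real (n - k) * ln ((1 - ?q) / (1 - p))) * (1 - p) ^ (n - k)
           = (1 - ?q) ^ (n - k)"
  proof (rule exp_part)
    assume "n - k \<noteq> 0"
    hence "k < n" by simp
    hence "?q < 1" using n0 by (simp add: field_simps)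
    moreover have "p \<noteq> 1" using False \<open>k < n\<close> q1 unfolding kinf_def by auto
    ultimately show "0 < 1 - ?q \<and> 0 < 1 - p" using p by auto
  qed
  have "exp (real n * klr ?q p) * (p ^ k * (1 - p) ^ (n - k)) = ?q ^ k * (1 - ?q) ^ (n - k)"
    unfolding e exp_add
    by (rule mult4_helper[OF A B])
  thus ?thesis using False p
    by (simp add: KLE_def ennreal_mult'[symmetric] del: ennreal_mult)
qed

lemma sum_Pow_card:
  fixes F :: "nat \<Rightarrow> real"
  shows "(\<Sum>A\<in>Pow {..<n}. F (card A)) = (\<Sum>k=0..n. real (n choose k) * F k)"
proof -
  have "(\<Sum>A\<in>Pow {..<n}. F (card A)) = (\<Sum>k\<in>{0..n}. \<Sum>A\<in>{A. A \<in> Pow {..<n} \<and> card A = k}. F (card A))"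
    by (rule sum.group[symmetric]) (auto simp: card_mono[of "{..<n}", simplified])
  also have "\<dots> = (\<Sum>k\<in>{0..n}. \<Sum>A\<in>{A. A \<in> Pow {..<n} \<and> card A = k}. F k)"
    by (intro sum.cong) auto
  also have "\<dots> = (\<Sum>k=0..n. real (n choose k) * F k)"
  proof (intro sum.cong refl)
    fix k
    have "card {A. A \<in> Pow {..<n} \<and> card A = k} = n choose k"
      using n_subsets[of "{..<n}" k] by simp
    thus "(\<Sum>A\<in>{A. A \<in> Pow {..<n} \<and> card A = k}. F k) = real (n choose k) * F k" by simp
  qed
  finally show ?thesis .
qed



lemma binom_expect:
  assumes D: "prob_space D" and G: "G \<in> sets D" and n: "n \<ge> 1"
  shows "(\<integral>\<^sup>+S. KLE n (real (card {i\<in>{..<n}. S i \<in> G}) / real n) (measure D G) \<partial>PiM {..<n} (\<lambda>_. D))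
         \<le> ennreal (2 * sqrt (real n))"
proof -
  interpret D: prob_space D by (rule D)
  interpret P: product_prob_space "\<lambda>_. D" by (rule product_prob_spaceI) (rule D)
  let ?M = "PiM {..<n} (\<lambda>_. D)"
  let ?p = "measure D G"
  define E where "E A = PiE {..<n} (\<lambda>i. if i \<in> A then G else space D - G)" for A
  define c where "c A = KLE n (real (card A) / real n) ?p" for A :: "nat set"
  have Esets: "E A \<in> sets ?M" for A
    unfolding E_def by (intro sets_PiM_I_finite) (use G in auto)
  have meas: "(\<lambda>S. c A * indicator (E A) S) \<in> borel_measurable ?M" for A
    using Esets[of A] by measurable
  have pt: "KLE n (real (card {i\<in>{..<n}. S i \<in> G}) / real n) ?p = (\<Sum>A\<in>Pow {..<n}. c A * indicator (E A) S)"
    if S: "S \<in> space ?M" for S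
  proof -
    let ?A0 = "{i\<in>{..<n}. S i \<in> G}"
    have ind: "indicator (E A) S = (if A = ?A0 then 1 else (0::ennreal))" if "A \<in> Pow {..<n}" for A
    proof -
      have "S \<in> E A \<longleftrightarrow> A = ?A0"
        using S that unfolding E_def by (auto simp: space_PiM PiE_def Pi_def)
      thus ?thesis by (simp add: indicator_def)
    qed
    have "(\<Sum>A\<in>Pow {..<n}. c A * indicator (E A) S) = (\<Sum>A\<in>Pow {..<n}. if A = ?A0 then c A else 0)"
      by (intro sum.cong refl) (simp add: ind)
    also have "\<dots> = c ?A0" by (subst sum.delta) auto
    finally show ?thesis by (simp add: c_def)
  qed
  have "(\<integral>\<^sup>+S. KLE n (real (card {i\<in>{..<n}. S i \<in> G}) / real n) ?p \<partial>?M)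
        = (\<integral>\<^sup>+S. (\<Sum>A\<in>Pow {..<n}. c A * indicator (E A) S) \<partial>?M)"
    by (intro nn_integral_cong) (rule pt)
  also have "\<dots> = (\<Sum>A\<in>Pow {..<n}. c A * emeasure ?M (E A))"
    by (subst nn_integral_sum) (auto simp: Esets nn_integral_cmult_indicator meas)
  also have "\<dots> \<le> (\<Sum>A\<in>Pow {..<n}. ennreal ((real (card A) / real n) ^ card A * (1 - real (card A) / real n) ^ (n - card A)))"
  proof (rule sum_mono)
    fix A assume A: "A \<in> Pow {..<n}"
    have cardA: "card A \<le> n" using A card_mono[of "{..<n}" A] by auto
    have "emeasure ?M (E A) = (\<Prod>i<n. emeasure D (if i \<in> A then G else space D - G))"
      unfolding E_def by (rule P.emeasure_PiM) (use G in auto)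
    also have "\<dots> = (\<Prod>i<n. ennreal (if i \<in> A then ?p else 1 - ?p))"
      by (intro prod.cong refl) (auto simp: D.emeasure_eq_measure D.prob_compl G)
    also have "\<dots> = ennreal (\<Prod>i<n. (if i \<in> A then ?p else 1 - ?p))"
      by (rule prod_ennreal) simp
    also have "(\<Prod>i<n. (if i \<in> A then ?p else 1 - ?p)) = ?p ^ card A * (1 - ?p) ^ (n - card A)"
    proof -
      have "(\<Prod>i<n. (if i \<in> A then ?p else 1 - ?p)) = (\<Prod>i\<in>{..<n} \<inter> {i. i \<in> A}. ?p) * (\<Prod>i\<in>{..<n} \<inter> - {i. i \<in> A}. 1 - ?p)"
        by (rule prod.If_cases) simp
      also have "{..<n} \<inter> {i. i \<in> A} = A" using A by auto
      also have "{..<n} \<inter> - {i. i \<in> A} = {..<n} - A" by auto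
      finally have eq: "(\<Prod>i<n. (if i \<in> A then ?p else 1 - ?p)) = (\<Prod>i\<in>A. ?p) * (\<Prod>i\<in>{..<n} - A. 1 - ?p)" .
      have "card ({..<n} - A) = n - card A" using A by (subst card_Diff_subset) (auto intro: finite_subset)
      thus ?thesis unfolding eq by simp
    qed
    finally have em: "emeasure ?M (E A) = ennreal (?p ^ card A * (1 - ?p) ^ (n - card A))" .
    show "c A * emeasure ?M (E A) \<le> ennreal ((real (card A) / real n) ^ card A * (1 - real (card A) / real n) ^ (n - card A))"
      unfolding em c_def by (rule KLE_binom[OF n cardA]) auto
  qed
  also have "\<dots> = ennreal (\<Sum>A\<in>Pow {..<n}. (real (card A) / real n) ^ card A * (1 - real (card A) / real n) ^ (n - card A))"
  proof (rule sum_ennreal)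
    fix A assume "A \<in> Pow {..<n}"
    hence "card A \<le> n" using card_mono[of "{..<n}" A] by auto
    hence "real (card A) / real n \<le> 1" using n by (simp add: divide_le_eq_1)
    thus "0 \<le> (real (card A) / real n) ^ card A * (1 - real (card A) / real n) ^ (n - card A)" by simp
  qed
  also have "(\<Sum>A\<in>Pow {..<n}. (real (card A) / real n) ^ card A * (1 - real (card A) / real n) ^ (n - card A))
      = (\<Sum>k=0..n. real (n choose k) * ((real k / real n) ^ k * (1 - real k / real n) ^ (n - k)))"
    by (rule sum_Pow_card)
  also have "\<dots> \<le> 2 * sqrt (real n)"
    using maurer[OF n] by (simp add: mult.assoc)
  finally show ?thesis by (simp add: ennreal_leI)
qed



lemma DV:
  fixes \<pi> \<rho> :: "'a measure" and \<phi> :: "'a \<Rightarrow> real" and Z :: real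
  assumes pi: "prob_space \<pi>" and rho: "prob_space \<rho>" and sets: "sets \<rho> = sets \<pi>"
    and ac: "absolutely_continuous \<pi> \<rho>"
    and int: "integrable \<rho> (\<lambda>x. ln (enn2real (RN_deriv \<pi> \<rho> x)))"
    and phi: "\<phi> \<in> borel_measurable \<pi>" "\<And>x. x \<in> space \<pi> \<Longrightarrow> 0 \<le> \<phi> x"
    and Z: "(\<integral>\<^sup>+x. ennreal (exp (\<phi> x)) \<partial>\<pi>) \<le> ennreal Z" "Z > 0"
  shows "integrable \<rho> \<phi> \<and> (\<integral>x. \<phi> x \<partial>\<rho>) \<le> (\<integral>x. ln (enn2real (RN_deriv \<pi> \<rho> x)) \<partial>\<rho>) + ln Z"
proof -
  interpret pi: prob_space \<pi> by (rule pi)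
  interpret rho: prob_space \<rho> by (rule rho)
  define r where "r = RN_deriv \<pi> \<rho>"
  define rr where "rr x = enn2real (r x)" for x
  have rmeas[measurable]: "r \<in> borel_measurable \<pi>" unfolding r_def by simp
  have space_eq: "space \<rho> = space \<pi>" using sets by (rule sets_eq_imp_space_eq)
  have rmeas': "r \<in> borel_measurable \<rho>" using rmeas by (simp add: measurable_cong_sets[OF sets refl])
  have phimeas: "\<phi> \<in> borel_measurable \<rho>" using phi(1) by (simp add: measurable_cong_sets[OF sets refl])
  have fin: "AE x in \<rho>. r x \<noteq> \<infinity>"
    unfolding r_def
    by (rule absolutely_continuous_AE[OF sets ac pi.RN_deriv_finite[OF rho.sigma_finite_measure_axioms ac sets]])
  have finpi: "AE x in \<pi>. r x \<noteq> \<infinity>"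
    unfolding r_def by (rule pi.RN_deriv_finite[OF rho.sigma_finite_measure_axioms ac sets])
  have pos: "AE x in \<rho>. r x \<noteq> 0"
  proof -
    have Nsets: "{x\<in>space \<rho>. r x = 0} \<in> sets \<rho>" using rmeas' by measurable
    have "emeasure \<rho> {x\<in>space \<rho>. r x = 0} = (\<integral>\<^sup>+x. indicator {x\<in>space \<rho>. r x = 0} x \<partial>\<rho>)"
      using Nsets by simp
    also have "\<dots> = (\<integral>\<^sup>+x. r x * indicator {x\<in>space \<rho>. r x = 0} x \<partial>\<pi>)"
      unfolding r_def by (rule pi.RN_deriv_nn_integral[OF ac sets]) (use Nsets sets in simp)
    also have "\<dots> = (\<integral>\<^sup>+x. 0 \<partial>\<pi>)"
      by (intro nn_integral_cong) (auto simp: indicator_def)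
    finally have "emeasure \<rho> {x\<in>space \<rho>. r x = 0} = 0" by simp
    thus ?thesis using AE_iff_measurable[OF Nsets] by auto
  qed
  have rrpos: "AE x in \<rho>. 0 < rr x"
    using fin pos by eventually_elim (auto simp: rr_def enn2real_positive_iff top.not_eq_extremum zero_less_iff_neq_zero)
  define g where "g x = exp (\<phi> x) / (rr x * Z)" for x
  have rrmeas: "rr \<in> borel_measurable \<rho>" unfolding rr_def using rmeas' by measurable
  have gmeas: "g \<in> borel_measurable \<rho>" unfolding g_def using rrmeas phimeas by measurable
  have gnn: "0 \<le> g x" for x unfolding g_def using Z(2) by (simp add: rr_def)
  have gN: "(\<integral>\<^sup>+x. ennreal (g x) \<partial>\<rho>) \<le> 1"
  proof -
    have "(\<integral>\<^sup>+x. ennreal (g x) \<partial>\<rho>) = (\<integral>\<^sup>+x. r x * ennreal (g x) \<partial>\<pi>)"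
      unfolding r_def by (rule pi.RN_deriv_nn_integral[OF ac sets]) (use gmeas in \<open>simp add: measurable_cong_sets[OF sets refl]\<close>)
    also have "\<dots> \<le> (\<integral>\<^sup>+x. ennreal (exp (\<phi> x)) * ennreal (1 / Z) \<partial>\<pi>)"
    proof (rule nn_integral_mono_AE)
      show "AE x in \<pi>. r x * ennreal (g x) \<le> ennreal (exp (\<phi> x)) * ennreal (1 / Z)"
        using finpi
      proof eventually_elim
        case (elim x)
        show ?case
        proof (cases "r x = 0")
          case False
          have rx: "r x = ennreal (rr x)" "rr x > 0"
            using elim False by (auto simp: rr_def enn2real_positive_iff top.not_eq_extremum zero_less_iff_neq_zero)
          have "r x * ennreal (g x) = ennreal (rr x * g x)"
            using rx gnn by (simp add: ennreal_mult)
          also have "rr x * g x = exp (\<phi> x) * (1 / Z)"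
            using rx Z(2) by (simp add: g_def field_simps)
          also have "ennreal (exp (\<phi> x) * (1 / Z)) = ennreal (exp (\<phi> x)) * ennreal (1 / Z)"
            by (rule ennreal_mult) (use Z(2) in auto)
          finally show ?thesis by simp
        qed simp
      qed
    qed
    also have "\<dots> = (\<integral>\<^sup>+x. ennreal (exp (\<phi> x)) \<partial>\<pi>) * ennreal (1 / Z)"
      by (rule nn_integral_multc) (use phi(1) in measurable)
    also have "\<dots> \<le> ennreal Z * ennreal (1 / Z)"
      by (rule mult_right_mono[OF Z(1)]) simp
    also have "\<dots> = 1" using Z(2) by (simp flip: ennreal_mult)
    finally show ?thesis .
  qed
  have gint: "integrable \<rho> g"
  proof (rule integrableI_bounded[OF gmeas])
    have "(\<integral>\<^sup>+x. ennreal (norm (g x)) \<partial>\<rho>) = (\<integral>\<^sup>+x. ennreal (g x) \<partial>\<rho>)" using gnn by simp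
    thus "(\<integral>\<^sup>+x. ennreal (norm (g x)) \<partial>\<rho>) < \<infinity>" using gN by (simp add: le_less_trans)
  qed
  have gI: "(\<integral>x. g x \<partial>\<rho>) \<le> 1"
  proof -
    have "(\<integral>x. g x \<partial>\<rho>) = enn2real (\<integral>\<^sup>+x. ennreal (g x) \<partial>\<rho>)"
      by (rule integral_eq_nn_integral[OF gmeas]) (simp add: gnn)
    also have "\<dots> \<le> enn2real 1" by (rule enn2real_mono[OF gN]) simp
    finally show ?thesis by simp
  qed
  define h where "h x = ln (rr x) + ln Z - 1 + g x" for x
  have hint: "integrable \<rho> h"
    unfolding h_def using int gint by (auto simp: rr_def r_def)
  have bound: "AE x in \<rho>. \<phi> x \<le> h x"
    using rrpos
  proof eventually_elim
    case (elim x)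
    have "1 + (\<phi> x - ln (rr x) - ln Z) \<le> exp (\<phi> x - ln (rr x) - ln Z)" by (rule exp_ge_add_one_self)
    also have "\<dots> = g x" using elim Z(2) by (simp add: exp_diff g_def)
    finally show ?case by (simp add: h_def)
  qed
  have phint: "integrable \<rho> \<phi>"
  proof (rule Bochner_Integration.integrable_bound[OF hint phimeas])
    show "AE x in \<rho>. norm (\<phi> x) \<le> norm (h x)"
      using bound AE_space
    proof eventually_elim
      case (elim x)
      thus ?case using phi(2)[of x] space_eq by auto
    qed
  qed
  have "(\<integral>x. \<phi> x \<partial>\<rho>) \<le> (\<integral>x. h x \<partial>\<rho>)"
    by (rule integral_mono_AE[OF phint hint bound])
  also have "(\<integral>x. h x \<partial>\<rho>) = (\<integral>x. ln (rr x) \<partial>\<rho>) + (ln Z - 1) + (\<integral>x. g x \<partial>\<rho>)"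
    unfolding h_def using int gint by (simp add: rr_def r_def rho.prob_space)
  also have "\<dots> \<le> (\<integral>x. ln (rr x) \<partial>\<rho>) + ln Z" using gI by simp
  finally show ?thesis using phint by (simp add: rr_def r_def)
qed



definition k1 :: "real \<Rightarrow> real \<Rightarrow> real" where
  "k1 q p = (if q = 0 then 0 else q * ln (q / p))"

lemma klr_split: "klr q p = k1 q p + k1 (1 - q) (1 - p)"
  unfolding klr_def k1_def by auto

lemma kinf_split: "kinf q p \<longleftrightarrow> (q \<noteq> 0 \<and> p = 0) \<or> (1 - q \<noteq> 0 \<and> 1 - p = 0)"
  unfolding kinf_def by auto

lemma k1_meas[measurable]:
  assumes [measurable]: "q \<in> borel_measurable M" "p \<in> borel_measurable M"
  shows "(\<lambda>x. k1 (q x) (p x)) \<in> borel_measurable M"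
  unfolding k1_def by measurable

lemma klr_meas[measurable]:
  assumes [measurable]: "q \<in> borel_measurable M" "p \<in> borel_measurable M"
  shows "(\<lambda>x. klr (q x) (p x)) \<in> borel_measurable M"
  unfolding klr_split by measurable

lemma k1_tangent:
  assumes A: "A > 0" "B > 0" and q: "q \<ge> 0" and p: "p \<ge> 0" and nk: "\<not> (q \<noteq> 0 \<and> p = 0)"
  shows "q * ln (A / B) + q - (A / B) * p \<le> k1 q p"
proof (cases "q = 0")
  case True thus ?thesis using A p by (simp add: k1_def)
next
  case False
  hence q0: "q > 0" and p0: "p > 0" using q p nk by auto
  let ?x = "p * A / (q * B)"
  have x0: "?x > 0" using q0 p0 A by simp
  have "ln ?x \<le> ?x - 1" by (rule ln_le_minus_one[OF x0])
  hence "q * (1 - ?x) \<le> q * (- ln ?x)" using q0 by (intro mult_left_mono) auto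
  moreover have "- ln ?x = ln (q / p) - ln (A / B)"
    using q0 p0 A by (simp add: ln_div ln_mult)
  moreover have "q * ?x = (A / B) * p" using q0 by (simp add: field_simps)
  ultimately show ?thesis using False by (simp add: k1_def algebra_simps)
qed

lemma k1_lower:
  assumes "q \<ge> 0" "p \<ge> 0" "p \<le> 1" "\<not> (q \<noteq> 0 \<and> p = 0)"
  shows "-1 \<le> k1 q p"
  using k1_tangent[of 1 1 q p] assms by simp

lemma k1_jensen:
  assumes rho: "prob_space \<rho>"
    and meas[measurable]: "q \<in> borel_measurable \<rho>" "p \<in> borel_measurable \<rho>"
    and rng: "\<And>x. x \<in> space \<rho> \<Longrightarrow> 0 \<le> q x \<and> q x \<le> 1 \<and> 0 \<le> p x \<and> p x \<le> 1"
    and nk: "AE x in \<rho>. \<not> (q x \<noteq> 0 \<and> p x = 0)"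
    and int: "integrable \<rho> (\<lambda>x. k1 (q x) (p x))"
  shows "\<not> ((\<integral>x. q x \<partial>\<rho>) \<noteq> 0 \<and> (\<integral>x. p x \<partial>\<rho>) = 0) \<and>
         k1 (\<integral>x. q x \<partial>\<rho>) (\<integral>x. p x \<partial>\<rho>) \<le> (\<integral>x. k1 (q x) (p x) \<partial>\<rho>)"
proof -
  interpret rho: prob_space \<rho> by (rule rho)
  define A where "A = (\<integral>x. q x \<partial>\<rho>)"
  define B where "B = (\<integral>x. p x \<partial>\<rho>)"
  have qint: "integrable \<rho> q"
    by (rule rho.integrable_const_bound[where B=1]) (use rng in \<open>auto intro!: AE_I2\<close>)
  have pint: "integrable \<rho> p"
    by (rule rho.integrable_const_bound[where B=1]) (use rng in \<open>auto intro!: AE_I2\<close>)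
  have qnn: "AE x in \<rho>. 0 \<le> q x" and pnn: "AE x in \<rho>. 0 \<le> p x" using rng by (auto intro!: AE_I2)
  have A0: "A \<ge> 0" unfolding A_def using qnn by (rule integral_nonneg_AE)
  have B0: "B \<ge> 0" unfolding B_def using pnn by (rule integral_nonneg_AE)
  show ?thesis unfolding A_def[symmetric] B_def[symmetric]
  proof (cases "A = 0")
    case True
    hence "AE x in \<rho>. q x = 0" using integral_nonneg_eq_0_iff_AE[OF qint qnn] by (simp add: A_def)
    hence "AE x in \<rho>. k1 (q x) (p x) = 0" by eventually_elim (simp add: k1_def)
    hence "(\<integral>x. k1 (q x) (p x) \<partial>\<rho>) = 0" by (simp add: integral_eq_zero_AE)
    thus "\<not> (A \<noteq> 0 \<and> B = 0) \<and> k1 A B \<le> (\<integral>x. k1 (q x) (p x) \<partial>\<rho>)" using True by (simp add: k1_def)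
  next
    case False
    hence Apos: "A > 0" using A0 by simp
    have Bpos: "B > 0"
    proof (rule ccontr)
      assume "\<not> B > 0"
      hence "B = 0" using B0 by simp
      hence "AE x in \<rho>. p x = 0" using integral_nonneg_eq_0_iff_AE[OF pint pnn] by (simp add: B_def)
      hence "AE x in \<rho>. q x = 0" using nk by eventually_elim auto
      hence "A = 0" unfolding A_def by (simp add: integral_eq_zero_AE)
      thus False using Apos by simp
    qed
    have "A * ln (A / B) = (\<integral>x. q x * ln (A / B) + q x - (A / B) * p x \<partial>\<rho>)"
      using qint pint Bpos by (simp add: A_def B_def)
    also have "\<dots> \<le> (\<integral>x. k1 (q x) (p x) \<partial>\<rho>)"
    proof (rule integral_mono_AE)
      show "integrable \<rho> (\<lambda>x. q x * ln (A / B) + q x - A / B * p x)" using qint pint by simp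
      show "integrable \<rho> (\<lambda>x. k1 (q x) (p x))" by (rule int)
      show "AE x in \<rho>. q x * ln (A / B) + q x - A / B * p x \<le> k1 (q x) (p x)"
        using nk qnn pnn by eventually_elim (rule k1_tangent[OF Apos Bpos], auto)
    qed
    finally show "\<not> (A \<noteq> 0 \<and> B = 0) \<and> k1 A B \<le> (\<integral>x. k1 (q x) (p x) \<partial>\<rho>)"
      using Apos Bpos by (simp add: k1_def)
  qed
qed

lemma klr_jensen:
  assumes rho: "prob_space \<rho>"
    and meas[measurable]: "q \<in> borel_measurable \<rho>" "p \<in> borel_measurable \<rho>"
    and rng: "\<And>x. x \<in> space \<rho> \<Longrightarrow> 0 \<le> q x \<and> q x \<le> 1 \<and> 0 \<le> p x \<and> p x \<le> 1"
    and nk: "AE x in \<rho>. \<not> kinf (q x) (p x)"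
    and int: "integrable \<rho> (\<lambda>x. klr (q x) (p x))"
  shows "\<not> kinf (\<integral>x. q x \<partial>\<rho>) (\<integral>x. p x \<partial>\<rho>) \<and>
         klr (\<integral>x. q x \<partial>\<rho>) (\<integral>x. p x \<partial>\<rho>) \<le> (\<integral>x. klr (q x) (p x) \<partial>\<rho>)"
proof -
  interpret rho: prob_space \<rho> by (rule rho)
  have qint: "integrable \<rho> q"
    by (rule rho.integrable_const_bound[where B=1]) (use rng in \<open>auto intro!: AE_I2\<close>)
  have pint: "integrable \<rho> p"
    by (rule rho.integrable_const_bound[where B=1]) (use rng in \<open>auto intro!: AE_I2\<close>)
  have lb: "AE x in \<rho>. -1 \<le> k1 (q x) (p x) \<and> -1 \<le> k1 (1 - q x) (1 - p x)"
    using nk AE_space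
  proof eventually_elim
    case (elim x)
    thus ?case using rng[of x] by (intro conjI k1_lower) (auto simp: kinf_def)
  qed
  have bnd: "integrable \<rho> (\<lambda>x. \<bar>klr (q x) (p x)\<bar> + 2)" using int by simp
  have int1: "integrable \<rho> (\<lambda>x. k1 (q x) (p x))"
  proof (rule Bochner_Integration.integrable_bound[OF bnd])
    show "AE x in \<rho>. norm (k1 (q x) (p x)) \<le> norm (\<bar>klr (q x) (p x)\<bar> + 2)"
      using lb by eventually_elim (auto simp: klr_split)
  qed simp
  have int2: "integrable \<rho> (\<lambda>x. k1 (1 - q x) (1 - p x))"
  proof (rule Bochner_Integration.integrable_bound[OF bnd])
    show "AE x in \<rho>. norm (k1 (1 - q x) (1 - p x)) \<le> norm (\<bar>klr (q x) (p x)\<bar> + 2)"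
      using lb by eventually_elim (auto simp: klr_split)
  qed simp
  have J1: "\<not> ((\<integral>x. q x \<partial>\<rho>) \<noteq> 0 \<and> (\<integral>x. p x \<partial>\<rho>) = 0) \<and>
         k1 (\<integral>x. q x \<partial>\<rho>) (\<integral>x. p x \<partial>\<rho>) \<le> (\<integral>x. k1 (q x) (p x) \<partial>\<rho>)"
    by (rule k1_jensen[OF rho meas rng _ int1]) (use nk in \<open>auto simp: kinf_def elim!: AE_mp intro!: AE_I2\<close>)
  have J2: "\<not> ((\<integral>x. 1 - q x \<partial>\<rho>) \<noteq> 0 \<and> (\<integral>x. 1 - p x \<partial>\<rho>) = 0) \<and>
         k1 (\<integral>x. 1 - q x \<partial>\<rho>) (\<integral>x. 1 - p x \<partial>\<rho>) \<le> (\<integral>x. k1 (1 - q x) (1 - p x) \<partial>\<rho>)"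
    by (rule k1_jensen[OF rho _ _ _ _ int2]) (use nk rng in \<open>auto simp: kinf_def elim!: AE_mp intro!: AE_I2\<close>)
  have e1: "(\<integral>x. 1 - q x \<partial>\<rho>) = 1 - (\<integral>x. q x \<partial>\<rho>)" using qint by (simp add: rho.prob_space)
  have e2: "(\<integral>x. 1 - p x \<partial>\<rho>) = 1 - (\<integral>x. p x \<partial>\<rho>)" using pint by (simp add: rho.prob_space)
  have "(\<integral>x. klr (q x) (p x) \<partial>\<rho>) = (\<integral>x. k1 (q x) (p x) \<partial>\<rho>) + (\<integral>x. k1 (1 - q x) (1 - p x) \<partial>\<rho>)"
    unfolding klr_split using int1 int2 by simp
  thus ?thesis using J1 J2 unfolding e1 e2 kinf_split klr_split by linarith
qed



lemma bmono_lt: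
  fixes b :: "nat \<Rightarrow> real"
  assumes mono: "\<forall>j<K. b j < b (Suc j)"
  shows "i < j \<Longrightarrow> j \<le> K \<Longrightarrow> b i < b j"
proof (induction j)
  case 0 thus ?case by simp
next
  case (Suc j)
  have bj: "b j < b (Suc j)" using mono Suc.prems by simp
  show ?case
  proof (cases "i = j")
    case True thus ?thesis using bj by simp
  next
    case False
    hence "i < j" using Suc.prems by simp
    hence "b i < b j" using Suc.IH Suc.prems by simp
    thus ?thesis using bj by simp
  qed
qed

lemma telescope_b:
  fixes b :: "nat \<Rightarrow> real"
  shows "(\<Sum>j=1..m. b j - b (j - 1)) = b m - b 0"
  by (induction m) (auto simp: sum.cl_ivl_Suc)

lemma layer:
  fixes b :: "nat \<Rightarrow> real"
  assumes mono: "\<forall>j<K. b j < b (Suc j)" and m: "m \<le> K"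
  shows "b m = b 0 + (\<Sum>j=1..K. (b j - b (j - 1)) * (if b j \<le> b m then 1 else 0))"
proof -
  have iff: "b j \<le> b m \<longleftrightarrow> j \<le> m" if "j \<in> {1..K}" for j
  proof
    assume "b j \<le> b m"
    thus "j \<le> m" using bmono_lt[OF mono, of m j] that by (cases "m < j") auto
  next
    assume "j \<le> m"
    thus "b j \<le> b m" using bmono_lt[OF mono, of j m] m by (cases "j < m") auto
  qed
  have "(\<Sum>j=1..K. (b j - b (j - 1)) * (if b j \<le> b m then 1 else 0))
        = (\<Sum>j\<in>{1..K}. if j \<le> m then b j - b (j - 1) else 0)"
    by (intro sum.cong refl) (simp add: iff)
  also have "\<dots> = (\<Sum>j\<in>{j\<in>{1..K}. j \<le> m}. b j - b (j - 1))"
    by (rule sum.inter_filter[symmetric]) simp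
  also have "{j\<in>{1..K}. j \<le> m} = {1..m}" using m by auto
  also have "(\<Sum>j\<in>{1..m}. b j - b (j - 1)) = b m - b 0" by (rule telescope_b)
  finally show ?thesis by simp
qed

lemma klr_nonneg:
  assumes "0 \<le> q" "q \<le> 1" "0 \<le> p" "p \<le> 1" "\<not> kinf q p"
  shows "0 \<le> klr q p"
proof -
  have "q - p \<le> k1 q p" using k1_tangent[of 1 1 q p] assms by (simp add: kinf_def)
  moreover have "(1 - q) - (1 - p) \<le> k1 (1 - q) (1 - p)"
    using k1_tangent[of 1 1 "1 - q" "1 - p"] assms by (simp add: kinf_def)
  ultimately show ?thesis unfolding klr_split by simp
qed

lemma KLE_meas[measurable]:
  assumes [measurable]: "q \<in> borel_measurable M" "p \<in> borel_measurable M"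
  shows "(\<lambda>x. KLE n (q x) (p x)) \<in> borel_measurable M"
  unfolding KLE_def kinf_def by measurable

lemma exp_le_KLE: "ennreal (exp (real n * (if kinf q p then 0 else klr q p))) \<le> KLE n q p"
  by (simp add: KLE_def)



lemma sum_if_card: "(\<Sum>i\<in>A. if P i then 1 else (0::real)) = real (card {i\<in>A. P i})" if "finite A"
  using that by (simp add: sum.If_cases Int_def conj_commute)

theorem theorem3p4:
  fixes MH :: "'h measure" and D :: "'z measure" and \<pi> :: "'h measure"
    and b :: "nat \<Rightarrow> real" and K n :: nat and f :: "'h \<Rightarrow> 'z \<Rightarrow> real" and \<delta> :: real
  assumes D: "prob_space D"
    and K: "K \<ge> 1"
    and b_mono: "\<forall>j<K. b j < b (Suc j)"
    and f_range: "\<forall>h\<in>space MH. \<forall>z\<in>space D. f h z \<in> b ` {0..K}"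
    and f_meas: "(\<lambda>(h, z). f h z) \<in> borel_measurable (MH \<Otimes>\<^sub>M D)"
    and n: "n \<ge> 1"
    and \<pi>: "\<pi> \<in> prob_dists MH"
    and \<delta>: "0 < \<delta>" "\<delta> < 1"
  shows "\<exists>A \<in> sets (PiM {..<n} (\<lambda>_. D)).
     {S \<in> space (PiM {..<n} (\<lambda>_. D)).
        \<exists>\<rho> \<in> prob_dists MH.
          (\<integral>h. (\<integral>z. f h z \<partial>D) \<partial>\<rho>) >
          b 0 + (\<Sum>j=1..K. (b j - b (j - 1)) *
             kl_inv_plus
               (\<integral>h. (1 / real n) * (\<Sum>i<n. if f h (S i) \<ge> b j then 1 else 0) \<partial>\<rho>)
               ((KL_div \<rho> \<pi> + ereal (ln (2 * real K * sqrt (real n) / \<delta>))) / ereal (real n)))}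
       \<subseteq> A
     \<and> measure (PiM {..<n} (\<lambda>_. D)) A \<le> \<delta>"
proof -
  interpret D: prob_space D by (rule D)
  interpret P: product_prob_space "\<lambda>_. D" by (rule product_prob_spaceI) (rule D)
  have pi_ps: "prob_space \<pi>" and pi_sets: "sets \<pi> = sets MH" using \<pi> by (auto simp: prob_dists_def)
  interpret pi: prob_space \<pi> by (rule pi_ps)
  define M where "M = PiM {..<n} (\<lambda>_. D)"
  have M_ps: "prob_space M" unfolding M_def by (rule prob_space_PiM) (rule D)
  interpret M: prob_space M by (rule M_ps)
  interpret PS: pair_sigma_finite \<pi> M
    by (intro pair_sigma_finite.intro pi.sigma_finite_measure_axioms M.sigma_finite_measure_axioms)
  have space_pi: "space \<pi> = space MH" using pi_sets by (rule sets_eq_imp_space_eq)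
  define t where "t = 2 * real K * sqrt (real n) / \<delta>"
  have t0: "t > 0" using K n \<delta> by (simp add: t_def)
  define pj where "pj j h = (\<integral>z. (if b j \<le> f h z then 1 else 0 :: real) \<partial>D)" for j h
  define qj where "qj j h S = (1 / real n) * (\<Sum>i<n. if b j \<le> f h (S i) then 1 else 0 :: real)" for j h S
  define Zf where "Zf j S = (\<integral>\<^sup>+h. KLE n (qj j h S) (pj j h) \<partial>\<pi>)" for j S
  define Bad where "Bad j = {S \<in> space M. 1 \<le> ennreal (1/t) * Zf j S}" for j
  define A where "A = (\<Union>j\<in>{1..K}. Bad j)"

  have fpi[measurable]: "(\<lambda>x. f (fst x) (snd x)) \<in> borel_measurable (\<pi> \<Otimes>\<^sub>M D)"
  proof -
    have "(\<lambda>x. f (fst x) (snd x)) \<in> borel_measurable (MH \<Otimes>\<^sub>M D)"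
      using f_meas by (simp add: case_prod_beta')
    moreover have "(borel_measurable (\<pi> \<Otimes>\<^sub>M D) :: ('h \<times> 'z \<Rightarrow> real) set) = borel_measurable (MH \<Otimes>\<^sub>M D)"
      by (rule measurable_cong_sets[OF sets_pair_measure_cong[OF pi_sets refl] refl])
    ultimately show ?thesis by simp
  qed
  have fcomp[measurable]: "(\<lambda>x. f (fst x) (snd x i)) \<in> borel_measurable (\<pi> \<Otimes>\<^sub>M M)" if "i < n" for i
  proof -
    have "(\<lambda>x. (fst x, snd x i)) \<in> measurable (\<pi> \<Otimes>\<^sub>M M) (\<pi> \<Otimes>\<^sub>M D)"
    proof -
      have "i \<in> {..<n}" using that by simp
      thus ?thesis unfolding M_def by measurable
    qed
    from measurable_compose[OF this fpi] show ?thesis by simp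
  qed
  have fcomp'[measurable]: "(\<lambda>x. f (snd x) (fst x i)) \<in> borel_measurable (M \<Otimes>\<^sub>M \<pi>)" if "i < n" for i
  proof -
    have "(\<lambda>x. (snd x, fst x i)) \<in> measurable (M \<Otimes>\<^sub>M \<pi>) (\<pi> \<Otimes>\<^sub>M D)"
    proof -
      have "i \<in> {..<n}" using that by simp
      thus ?thesis unfolding M_def by measurable
    qed
    from measurable_compose[OF this fpi] show ?thesis by simp
  qed
  have pj_meas[measurable]: "pj j \<in> borel_measurable \<pi>" for j
  proof -
    have "(\<lambda>x. (if b j \<le> f (fst x) (snd x) then 1 else 0 :: real)) \<in> borel_measurable (\<pi> \<Otimes>\<^sub>M D)"
      by measurable
    hence "case_prod (\<lambda>h z. (if b j \<le> f h z then 1 else 0 :: real)) \<in> borel_measurable (\<pi> \<Otimes>\<^sub>M D)"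
      by (simp add: case_prod_beta')
    thus ?thesis unfolding pj_def by (rule D.borel_measurable_lebesgue_integral)
  qed
  have qj_meas[measurable]: "(\<lambda>x. qj j (fst x) (snd x)) \<in> borel_measurable (\<pi> \<Otimes>\<^sub>M M)" for j
    unfolding qj_def by measurable
  have qj_meas'[measurable]: "(\<lambda>x. qj j (snd x) (fst x)) \<in> borel_measurable (M \<Otimes>\<^sub>M \<pi>)" for j
    unfolding qj_def by measurable
  have KLE_meas1: "(\<lambda>x. KLE n (qj j (fst x) (snd x)) (pj j (fst x))) \<in> borel_measurable (\<pi> \<Otimes>\<^sub>M M)" for j
    by measurable
  have KLE_meas2: "(\<lambda>x. KLE n (qj j (snd x) (fst x)) (pj j (snd x))) \<in> borel_measurable (M \<Otimes>\<^sub>M \<pi>)" for j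
    by measurable
  have Zf_meas[measurable]: "Zf j \<in> borel_measurable M" for j
  proof -
    have "case_prod (\<lambda>S h. KLE n (qj j h S) (pj j h)) \<in> borel_measurable (M \<Otimes>\<^sub>M \<pi>)"
      using KLE_meas2[of j] by (simp add: case_prod_beta')
    thus ?thesis unfolding Zf_def by (rule pi.borel_measurable_nn_integral)
  qed
  have Bad_sets: "Bad j \<in> sets M" for j unfolding Bad_def by measurable
  have A_sets: "A \<in> sets M" unfolding A_def using Bad_sets by auto
  have fh_meas: "(\<lambda>z. f h z) \<in> borel_measurable D" if "h \<in> space \<pi>" for h
    using measurable_Pair2[OF fpi that] by simp
  have E1: "(\<integral>\<^sup>+S. KLE n (qj j h S) (pj j h) \<partial>M) \<le> ennreal (2 * sqrt (real n))"
    if h: "h \<in> space \<pi>" for j h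
  proof -
    define G where "G = {z\<in>space D. b j \<le> f h z}"
    have G: "G \<in> sets D" unfolding G_def using fh_meas[OF h] by measurable
    have pG: "pj j h = measure D G"
    proof -
      have "pj j h = (\<integral>z. indicator G z \<partial>D)"
        unfolding pj_def by (intro Bochner_Integration.integral_cong) (auto simp: G_def indicator_def)
      also have "\<dots> = measure D G" using G by (simp add: Int_absorb2 sets.sets_into_space)
      finally show ?thesis .
    qed
    have qG: "qj j h S = real (card {i\<in>{..<n}. S i \<in> G}) / real n" if S: "S \<in> space M" for S
    proof -
      have Si: "S i \<in> space D" if "i < n" for i using S that by (auto simp: M_def space_PiM)
      have "(\<Sum>i<n. if b j \<le> f h (S i) then 1 else 0 :: real) = (\<Sum>i<n. if S i \<in> G then 1 else 0)"
        by (intro sum.cong refl) (auto simp: G_def Si)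
      also have "\<dots> = real (card {i\<in>{..<n}. S i \<in> G})" by (rule sum_if_card) simp
      finally show ?thesis unfolding qj_def by simp
    qed
    have "(\<integral>\<^sup>+S. KLE n (qj j h S) (pj j h) \<partial>M) = (\<integral>\<^sup>+S. KLE n (real (card {i\<in>{..<n}. S i \<in> G}) / real n) (measure D G) \<partial>M)"
      by (intro nn_integral_cong) (simp add: qG pG)
    also have "\<dots> \<le> ennreal (2 * sqrt (real n))" unfolding M_def by (rule binom_expect[OF D G n])
    finally show ?thesis .
  qed
  have E2: "(\<integral>\<^sup>+S. Zf j S \<partial>M) \<le> ennreal (2 * sqrt (real n))" for j
  proof -
    have "(\<integral>\<^sup>+S. Zf j S \<partial>M) = (\<integral>\<^sup>+h. (\<integral>\<^sup>+S. KLE n (qj j h S) (pj j h) \<partial>M) \<partial>\<pi>)"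
      unfolding Zf_def
    proof (rule PS.Fubini')
      show "case_prod (\<lambda>h S. KLE n (qj j h S) (pj j h)) \<in> borel_measurable (\<pi> \<Otimes>\<^sub>M M)"
        using KLE_meas1[of j] by (simp add: case_prod_beta')
    qed
    also have "\<dots> \<le> (\<integral>\<^sup>+h. ennreal (2 * sqrt (real n)) \<partial>\<pi>)"
      by (intro nn_integral_mono E1)
    also have "\<dots> = ennreal (2 * sqrt (real n))" by (simp add: pi.emeasure_space_1)
    finally show ?thesis .
  qed
  have E3: "emeasure M (Bad j) \<le> ennreal (\<delta> / real K)" for j
  proof -
    have "emeasure M (Bad j) = emeasure M {x\<in>space M. 1 \<le> ennreal (1/t) * Zf j x}"
      by (simp add: Bad_def)
    also have "\<dots> \<le> ennreal (1/t) * (\<integral>\<^sup>+x. Zf j x * indicator (space M) x \<partial>M)"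
      by (rule nn_integral_Markov_inequality) auto
    also have "(\<integral>\<^sup>+x. Zf j x * indicator (space M) x \<partial>M) = (\<integral>\<^sup>+x. Zf j x \<partial>M)"
      by (intro nn_integral_cong) simp
    also have "ennreal (1/t) * \<dots> \<le> ennreal (1/t) * ennreal (2 * sqrt (real n))"
      by (intro mult_left_mono E2) simp
    also have "\<dots> = ennreal (\<delta> / real K)"
    proof -
      have "1/t * (2 * sqrt (real n)) = \<delta> / real K"
        using K n \<delta> by (simp add: t_def field_simps)
      thus ?thesis using t0 by (simp flip: ennreal_mult)
    qed
    finally show ?thesis .
  qed
  have E4: "measure M A \<le> \<delta>"
  proof -
    have "emeasure M A \<le> (\<Sum>j\<in>{1..K}. emeasure M (Bad j))"
      unfolding A_def by (rule emeasure_subadditive_finite) (auto simp: Bad_sets)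
    also have "\<dots> \<le> (\<Sum>j\<in>{1..K}. ennreal (\<delta> / real K))" by (intro sum_mono E3)
    also have "\<dots> = ennreal \<delta>"
    proof -
      have "(\<Sum>j\<in>{1..K}. ennreal (\<delta> / real K)) = ennreal (real K) * ennreal (\<delta> / real K)"
        by (simp add: ennreal_of_nat_eq_real_of_nat)
      also have "\<dots> = ennreal (real K * (\<delta> / real K))" using \<delta> by (subst ennreal_mult) simp_all
      also have "real K * (\<delta> / real K) = \<delta>" using K by simp
      finally show ?thesis .
    qed
    finally show ?thesis using \<delta> by (simp add: M.emeasure_eq_measure)
  qed
  have pjG: "pj j h = measure D {z\<in>space D. b j \<le> f h z}" if h: "h \<in> space \<pi>" for j h
  proof -
    have G: "{z\<in>space D. b j \<le> f h z} \<in> sets D" using fh_meas[OF h] by measurable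
    have "pj j h = (\<integral>z. indicator {z\<in>space D. b j \<le> f h z} z \<partial>D)"
      unfolding pj_def by (intro Bochner_Integration.integral_cong) (auto simp: indicator_def)
    also have "\<dots> = measure D {z\<in>space D. b j \<le> f h z}" using G by (simp add: Int_absorb2 sets.sets_into_space)
    finally show ?thesis .
  qed
  have range_p: "0 \<le> pj j h \<and> pj j h \<le> 1" if "h \<in> space \<pi>" for j h
    using pjG[OF that, of j] by simp
  have range_q: "0 \<le> qj j h S \<and> qj j h S \<le> 1" for j h S
  proof -
    have s0: "0 \<le> (\<Sum>i<n. if b j \<le> f h (S i) then 1 else 0 :: real)" by (intro sum_nonneg) auto
    have "(\<Sum>i<n. if b j \<le> f h (S i) then 1 else 0 :: real) \<le> (\<Sum>i<n. 1)" by (intro sum_mono) auto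
    hence s1: "(\<Sum>i<n. if b j \<le> f h (S i) then 1 else 0 :: real) \<le> real n" by simp
    show ?thesis unfolding qj_def using s0 s1 n by (auto simp: field_simps)
  qed
  have perj: "(\<integral>h. pj j h \<partial>\<rho>) \<le> kl_inv_plus (\<integral>h. qj j h S \<partial>\<rho>) ((KL_div \<rho> \<pi> + ereal (ln t)) / ereal (real n))"
    if j: "j \<in> {1..K}" and good: "\<not> 1 \<le> ennreal (1/t) * Zf j S" and \<rho>: "\<rho> \<in> prob_dists MH"
      and S: "S \<in> space M" for j \<rho> S
  proof -
    have rho_ps: "prob_space \<rho>" and rho_sets: "sets \<rho> = sets \<pi>" using \<rho> pi_sets by (auto simp: prob_dists_def)
    interpret rho: prob_space \<rho> by (rule rho_ps)
    have space_rho: "space \<rho> = space \<pi>" using rho_sets by (rule sets_eq_imp_space_eq)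
    have Zle: "Zf j S \<le> ennreal t" and Zfin: "Zf j S \<noteq> \<infinity>"
    proof -
      show "Zf j S \<noteq> \<infinity>"
      proof
        assume "Zf j S = \<infinity>"
        hence "ennreal (1/t) * Zf j S = \<infinity>" using t0 by (simp add: ennreal_mult_top)
        thus False using good by simp
      qed
      then obtain z where z: "Zf j S = ennreal z" "0 \<le> z" by (cases "Zf j S") auto
      have "ennreal (1/t) * Zf j S = ennreal (z / t)" using z t0 by (simp flip: ennreal_mult add: divide_inverse mult.commute)
      hence "z / t < 1" using good by (simp add: not_le)
      hence "z \<le> t" using t0 by (simp add: field_simps)
      thus "Zf j S \<le> ennreal t" using z by simp
    qed
    have pj_rho[measurable]: "pj j \<in> borel_measurable \<rho>"
      using pj_meas[of j] by (simp add: measurable_cong_sets[OF rho_sets refl])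
    have qS_meas[measurable]: "(\<lambda>h. qj j h S) \<in> borel_measurable \<pi>"
      using measurable_Pair1[OF qj_meas[of j] S] by simp
    have qS_rho[measurable]: "(\<lambda>h. qj j h S) \<in> borel_measurable \<rho>"
      using qS_meas by (simp add: measurable_cong_sets[OF rho_sets refl])
    have rng: "0 \<le> qj j h S \<and> qj j h S \<le> 1 \<and> 0 \<le> pj j h \<and> pj j h \<le> 1" if "h \<in> space \<rho>" for h
      using range_q[of j h S] range_p[of h j] that space_rho by auto
    define Q where "Q = (\<integral>h. qj j h S \<partial>\<rho>)"
    define P where "P = (\<integral>h. pj j h \<partial>\<rho>)"
    have qint: "integrable \<rho> (\<lambda>h. qj j h S)"
      by (rule rho.integrable_const_bound[where B=1]) (use rng in \<open>auto intro!: AE_I2\<close>)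
    have pint: "integrable \<rho> (pj j)"
      by (rule rho.integrable_const_bound[where B=1]) (use rng in \<open>auto intro!: AE_I2\<close>)
    have P01: "0 \<le> P \<and> P \<le> 1"
    proof
      show "0 \<le> P" unfolding P_def by (rule integral_nonneg_AE) (use rng in \<open>auto intro!: AE_I2\<close>)
      have "P \<le> (\<integral>h. 1 \<partial>\<rho>)" unfolding P_def
        by (rule integral_mono_AE[OF pint]) (use rng in \<open>auto intro!: AE_I2\<close>)
      thus "P \<le> 1" by (simp add: rho.prob_space)
    qed
    define eps where "eps = (KL_div \<rho> \<pi> + ereal (ln t)) / ereal (real n)"
    have klP: "kl_bin Q P \<le> eps"
    proof (cases "KL_div \<rho> \<pi> = \<infinity>")
      case True
      hence "eps = \<infinity>" unfolding eps_def using n by simp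
      thus ?thesis by simp
    next
      case False
      hence ac: "absolutely_continuous \<pi> \<rho>"
        and lnint: "integrable \<rho> (\<lambda>x. ln (enn2real (RN_deriv \<pi> \<rho> x)))"
        and KLeq: "KL_div \<rho> \<pi> = ereal (\<integral>x. ln (enn2real (RN_deriv \<pi> \<rho> x)) \<partial>\<rho>)"
        unfolding KL_div_def by (auto split: if_splits)
      define \<phi> where "\<phi> h = real n * (if kinf (qj j h S) (pj j h) then 0 else klr (qj j h S) (pj j h))" for h
      have phi_meas: "\<phi> \<in> borel_measurable \<pi>" unfolding \<phi>_def kinf_def by measurable
      have phi_rho[measurable]: "\<phi> \<in> borel_measurable \<rho>"
        using phi_meas by (simp add: measurable_cong_sets[OF rho_sets refl])
      have phi_nn: "0 \<le> \<phi> h" if "h \<in> space \<pi>" for h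
        using rng[of h] that space_rho klr_nonneg[of "qj j h S" "pj j h"] by (auto simp: \<phi>_def)
      have phiZ: "(\<integral>\<^sup>+h. ennreal (exp (\<phi> h)) \<partial>\<pi>) \<le> ennreal t"
      proof -
        have "(\<integral>\<^sup>+h. ennreal (exp (\<phi> h)) \<partial>\<pi>) \<le> Zf j S"
          unfolding Zf_def \<phi>_def by (intro nn_integral_mono exp_le_KLE)
        thus ?thesis using Zle by simp
      qed
      have DVr: "integrable \<rho> \<phi> \<and> (\<integral>x. \<phi> x \<partial>\<rho>) \<le> (\<integral>x. ln (enn2real (RN_deriv \<pi> \<rho> x)) \<partial>\<rho>) + ln t"
        by (rule DV[OF pi_ps rho_ps rho_sets ac lnint phi_meas phi_nn phiZ t0])
      have AEpi: "AE h in \<pi>. \<not> kinf (qj j h S) (pj j h)"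
      proof -
        have "AE h in \<pi>. KLE n (qj j h S) (pj j h) \<noteq> \<infinity>"
          by (rule nn_integral_PInf_AE) (use Zfin in \<open>auto simp: Zf_def\<close>)
        thus ?thesis by eventually_elim (auto simp: KLE_def)
      qed
      have AErho: "AE h in \<rho>. \<not> kinf (qj j h S) (pj j h)"
        by (rule absolutely_continuous_AE[OF rho_sets ac AEpi])
      have AEeq: "AE h in \<rho>. klr (qj j h S) (pj j h) = \<phi> h / real n"
        using AErho by eventually_elim (use n in \<open>simp add: \<phi>_def\<close>)
      have klrint: "integrable \<rho> (\<lambda>h. klr (qj j h S) (pj j h))"
      proof -
        have "integrable \<rho> (\<lambda>h. \<phi> h / real n)" using DVr by simp
        moreover have "(\<lambda>h. klr (qj j h S) (pj j h)) \<in> borel_measurable \<rho>" by measurable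
        moreover have "AE h in \<rho>. \<phi> h / real n = klr (qj j h S) (pj j h)" using AEeq by eventually_elim simp
        ultimately show ?thesis by (rule integrable_cong_AE_imp)
      qed
      have klrI: "(\<integral>h. klr (qj j h S) (pj j h) \<partial>\<rho>) = (\<integral>h. \<phi> h \<partial>\<rho>) / real n"
      proof -
        have "(\<integral>h. klr (qj j h S) (pj j h) \<partial>\<rho>) = (\<integral>h. \<phi> h / real n \<partial>\<rho>)"
          using AEeq by (intro integral_cong_AE) auto
        thus ?thesis by simp
      qed
      have J: "\<not> kinf Q P \<and> klr Q P \<le> (\<integral>h. klr (qj j h S) (pj j h) \<partial>\<rho>)"
        unfolding Q_def P_def by (rule klr_jensen[OF rho_ps qS_rho pj_rho rng AErho klrint])
      have "klr Q P \<le> ((\<integral>x. ln (enn2real (RN_deriv \<pi> \<rho> x)) \<partial>\<rho>) + ln t) / real n"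
      proof -
        have "(\<integral>h. \<phi> h \<partial>\<rho>) / real n \<le> ((\<integral>x. ln (enn2real (RN_deriv \<pi> \<rho> x)) \<partial>\<rho>) + ln t) / real n"
          using DVr n by (intro divide_right_mono) auto
        thus ?thesis using J klrI by linarith
      qed
      hence "ereal (klr Q P) \<le> eps" unfolding eps_def KLeq using n by simp
      thus ?thesis using J by (simp add: kl_bin_alt)
    qed
    have "P \<le> Sup {p \<in> {0..1}. kl_bin Q p \<le> eps}"
      by (rule cSup_upper) (use P01 klP in \<open>auto intro!: bdd_aboveI[where M=1]\<close>)
    thus ?thesis by (simp add: kl_inv_plus_def P_def Q_def eps_def)
  qed
  have alpha_nn: "0 \<le> b j - b (j - 1)" if "j \<in> {1..K}" for j
    using b_mono that by (cases j) (auto simp: less_imp_le)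
  have inner: "(\<integral>z. f h z \<partial>D) = b 0 + (\<Sum>j=1..K. (b j - b (j - 1)) * pj j h)" if h: "h \<in> space \<pi>" for h
  proof -
    have ind_int: "integrable D (\<lambda>z. if b j \<le> f h z then 1 else 0 :: real)" for j
      by (rule D.integrable_const_bound[where B=1]) (use fh_meas[OF h] in \<open>auto intro!: AE_I2\<close>)
    have "(\<integral>z. f h z \<partial>D) = (\<integral>z. b 0 + (\<Sum>j=1..K. (b j - b (j - 1)) * (if b j \<le> f h z then 1 else 0)) \<partial>D)"
    proof (intro Bochner_Integration.integral_cong refl)
      fix z assume z: "z \<in> space D"
      then obtain m where m: "m \<in> {0..K}" "f h z = b m" using f_range h space_pi by blast
      show "f h z = b 0 + (\<Sum>j=1..K. (b j - b (j - 1)) * (if b j \<le> f h z then 1 else 0))"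
        unfolding m(2) using layer[OF b_mono, of m] m(1) by simp
    qed
    also have "\<dots> = b 0 + (\<Sum>j=1..K. (b j - b (j - 1)) * pj j h)"
      using ind_int by (simp add: Bochner_Integration.integral_sum D.prob_space pj_def)
    finally show ?thesis .
  qed
  show ?thesis
  proof (intro bexI[of _ A] conjI)
    show "A \<in> sets (PiM {..<n} (\<lambda>_. D))" using A_sets by (simp add: M_def)
    show "measure (PiM {..<n} (\<lambda>_. D)) A \<le> \<delta>" using E4 by (simp add: M_def)
    show "{S \<in> space (PiM {..<n} (\<lambda>_. D)).
        \<exists>\<rho> \<in> prob_dists MH.
          (\<integral>h. (\<integral>z. f h z \<partial>D) \<partial>\<rho>) >
          b 0 + (\<Sum>j=1..K. (b j - b (j - 1)) *
             kl_inv_plus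
               (\<integral>h. (1 / real n) * (\<Sum>i<n. if f h (S i) \<ge> b j then 1 else 0) \<partial>\<rho>)
               ((KL_div \<rho> \<pi> + ereal (ln (2 * real K * sqrt (real n) / \<delta>))) / ereal (real n)))}
       \<subseteq> A"
    proof (intro subsetI)
      fix S assume "S \<in> {S \<in> space (PiM {..<n} (\<lambda>_. D)).
        \<exists>\<rho> \<in> prob_dists MH.
          (\<integral>h. (\<integral>z. f h z \<partial>D) \<partial>\<rho>) >
          b 0 + (\<Sum>j=1..K. (b j - b (j - 1)) *
             kl_inv_plus
               (\<integral>h. (1 / real n) * (\<Sum>i<n. if f h (S i) \<ge> b j then 1 else 0) \<partial>\<rho>)
               ((KL_div \<rho> \<pi> + ereal (ln (2 * real K * sqrt (real n) / \<delta>))) / ereal (real n)))}"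
      then obtain \<rho> where S: "S \<in> space M" and \<rho>: "\<rho> \<in> prob_dists MH"
        and gt: "(\<integral>h. (\<integral>z. f h z \<partial>D) \<partial>\<rho>) >
          b 0 + (\<Sum>j=1..K. (b j - b (j - 1)) * kl_inv_plus (\<integral>h. qj j h S \<partial>\<rho>)
               ((KL_div \<rho> \<pi> + ereal (ln t)) / ereal (real n)))"
        by (auto simp: M_def qj_def t_def)
      show "S \<in> A"
      proof (rule ccontr)
        assume "S \<notin> A"
        hence good: "\<not> 1 \<le> ennreal (1/t) * Zf j S" if "j \<in> {1..K}" for j
          using S that by (auto simp: A_def Bad_def)
        have rho_ps: "prob_space \<rho>" and rho_sets: "sets \<rho> = sets \<pi>" using \<rho> pi_sets by (auto simp: prob_dists_def)
        interpret rho: prob_space \<rho> by (rule rho_ps)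
        have space_rho: "space \<rho> = space \<pi>" using rho_sets by (rule sets_eq_imp_space_eq)
        have pint: "integrable \<rho> (pj j)" for j
        proof (rule rho.integrable_const_bound[where B=1])
          show "AE x in \<rho>. norm (pj j x) \<le> 1" using range_p space_rho by (auto intro!: AE_I2)
          show "pj j \<in> borel_measurable \<rho>"
            using pj_meas[of j] by (simp add: measurable_cong_sets[OF rho_sets refl])
        qed
        have "(\<integral>h. (\<integral>z. f h z \<partial>D) \<partial>\<rho>) = (\<integral>h. b 0 + (\<Sum>j=1..K. (b j - b (j - 1)) * pj j h) \<partial>\<rho>)"
          by (intro Bochner_Integration.integral_cong refl) (simp add: inner space_rho)
        also have "\<dots> = b 0 + (\<Sum>j=1..K. (b j - b (j - 1)) * (\<integral>h. pj j h \<partial>\<rho>))"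
          using pint by (simp add: Bochner_Integration.integral_sum rho.prob_space)
        also have "\<dots> \<le> b 0 + (\<Sum>j=1..K. (b j - b (j - 1)) * kl_inv_plus (\<integral>h. qj j h S \<partial>\<rho>)
               ((KL_div \<rho> \<pi> + ereal (ln t)) / ereal (real n)))"
          by (intro add_left_mono sum_mono mult_left_mono perj good \<rho> S alpha_nn) auto
        finally show False using gt by simp
      qed
    qed
  qed
qed


end
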